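(* Let $\{M^x\}_{x>0}$ be a family of non-quasianalytic weight sequences such that $\mu^x\lesssim\mu^y$ whenever $x\le y$, and $$\forall x>0\ \exists y>0\ \exists C>0\ \forall k\ge1:\ \sum_{\ell\ge k}\frac1{\mu^y_\ell}\le C\frac{k}{\mu^x_k}.$$ Then there exists a family $\{S^x\}_{x>0}$ of non-quasianalytic weight sequences such that: (1) for each $x>0$, $\sigma^x_k/k\ge1$ and $k\mapsto\sigma^x_k/k$ is increasing to $\infty$; (2) $\sigma^x\lesssim\sigma^y$ whenever $x\le y$; (3) $\forall x>0\ \exists y>0\ \exists C>0\ \forall k\ge1:\ \sum_{\ell\ge k}\frac1{\sigma^y_\ell}\le C\frac{k}{\sigma^x_k}$; (4) $\forall x>0\ \exists y>0:\ \sigma^x\lesssim\mu^y$, and $\forall x>0\ \exists y>0:\ \mu^x\lesssim\sigma^y$.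
   Context: A weight sequence is given by an increasing sequence $1=\mu_0\le\mu_1\le\cdots$ via $M_k=\mu_0\cdots\mu_k$, with $M_k^{1/k}\to\infty$; it is non-quasianalytic if $\sum_k1/\mu_k<\infty$. Similarly $\sigma^x\leftrightarrow S^x$ and $\mu^x\leftrightarrow M^x$. For sequences, $a\lesssim b$ means $a_k\le Cb_k$ for all $k$ with a constant $C>0$. *)

theory Defs
  imports "HOL-Analysis.Analysis"
begin

text \<open>A weight sequence, given via its quotient sequence mu:
  1 = mu 0 <= mu 1 <= ..., with M k = mu 0 * ... * mu k and (M k)^(1/k) tending to infinity.\<close>

definition weight_M :: "(nat \<Rightarrow> real) \<Rightarrow> nat \<Rightarrow> real" where
  "weight_M mu k = (\<Prod>j\<le>k. mu j)"

definition weight_seq :: "(nat \<Rightarrow> real) \<Rightarrow> bool" where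
  "weight_seq mu \<longleftrightarrow> mu 0 = 1 \<and> mono mu \<and>
     filterlim (\<lambda>k. weight_M mu k powr (1 / real k)) at_top sequentially"

definition nonquasianalytic :: "(nat \<Rightarrow> real) \<Rightarrow> bool" where
  "nonquasianalytic mu \<longleftrightarrow> summable (\<lambda>k. 1 / mu k)"

definition nq_weight_seq :: "(nat \<Rightarrow> real) \<Rightarrow> bool" where
  "nq_weight_seq mu \<longleftrightarrow> weight_seq mu \<and> nonquasianalytic mu"

definition seq_lesssim :: "(nat \<Rightarrow> real) \<Rightarrow> (nat \<Rightarrow> real) \<Rightarrow> bool" where
  "seq_lesssim a b \<longleftrightarrow> (\<exists>C>0. \<forall>k. a k \<le> C * b k)"

definition tail_sum :: "(nat \<Rightarrow> real) \<Rightarrow> nat \<Rightarrow> real" where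
  "tail_sum mu k = (\<Sum>l. 1 / mu (l + k))"

end

theory Submission
  imports Defs
begin


lemma nq_ge1: assumes "nq_weight_seq f" shows "f l \<ge> 1"
proof -
  have "f 0 \<le> f l" using assms unfolding nq_weight_seq_def weight_seq_def mono_def by (metis le0)
  moreover have "f 0 = 1" using assms unfolding nq_weight_seq_def weight_seq_def by simp
  ultimately show ?thesis by simp
qed

lemma nq_pos: "nq_weight_seq f \<Longrightarrow> f l > 0"
  using nq_ge1[of f l] by simp

lemma nq_mono: "nq_weight_seq f \<Longrightarrow> l \<le> l' \<Longrightarrow> f l \<le> f l'"
  unfolding nq_weight_seq_def weight_seq_def mono_def by auto

lemma nq_summable: "nq_weight_seq f \<Longrightarrow> summable (\<lambda>l. 1 / f l)"
  unfolding nq_weight_seq_def nonquasianalytic_def by simp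

lemma nq_lin:
  assumes "nq_weight_seq f"
  shows "real k \<le> (\<Sum>l. 1 / f l) * f k"
proof -
  have "real k / f k = (\<Sum>j<k. 1 / f k)" by simp
  also have "\<dots> \<le> (\<Sum>j<k. 1 / f j)"
    by (intro sum_mono divide_left_mono) (auto intro: nq_mono[OF assms] nq_pos[OF assms] mult_pos_pos)
  also have "\<dots> \<le> (\<Sum>l. 1 / f l)"
    by (intro sum_le_suminf nq_summable[OF assms]) (auto intro: less_imp_le nq_pos[OF assms])
  finally show ?thesis using nq_pos[OF assms, of k] by (simp add: divide_le_eq)
qed

lemma nq_tail_ge:
  assumes "nq_weight_seq f" "k \<le> l"
  shows "real (l - k + 1) / f l \<le> tail_sum f k"
proof -
  have "real (l - k + 1) / f l = (\<Sum>i<l-k+1. 1 / f l)" by simp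
  also have "\<dots> \<le> (\<Sum>i<l-k+1. 1 / f (i + k))"
    by (intro sum_mono divide_left_mono) (use assms in \<open>auto intro!: nq_mono[OF assms(1)] nq_pos[OF assms(1)] mult_pos_pos\<close>)
  also have "\<dots> \<le> tail_sum f k" unfolding tail_sum_def
    by (intro sum_le_suminf) (use summable_iff_shift[of "\<lambda>l. 1 / f l" k] nq_summable[OF assms(1)] in \<open>auto intro: less_imp_le nq_pos[OF assms(1)]\<close>)
  finally show ?thesis .
qed

lemma tail_le:
  assumes "summable (\<lambda>l. 1 / f l)" "summable (\<lambda>l. 1 / h l)" "\<And>l. f l \<le> A * h l" "\<And>l. f l > 0" "A > 0"
  shows "tail_sum h k \<le> A * tail_sum f k"
proof -
  have "tail_sum h k \<le> (\<Sum>l. A * (1 / f (l + k)))" unfolding tail_sum_def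
  proof (rule suminf_le)
    fix l
    have "f (l+k) > 0" by (rule assms(4))
    moreover have "f (l+k) \<le> A * h (l+k)" by (rule assms(3))
    ultimately have "h (l+k) > 0" using assms(5) by (smt (verit) mult_nonneg_nonpos)
    with \<open>f (l+k) > 0\<close> \<open>f (l+k) \<le> A * h (l+k)\<close> show "1 / h (l + k) \<le> A * (1 / f (l + k))"
      by (simp add: field_simps)
  qed (use assms summable_iff_shift[of "\<lambda>l. 1 / f l" k] summable_iff_shift[of "\<lambda>l. 1 / h l" k] summable_mult[of "\<lambda>l. 1 / f (l+k)" A] in auto)
  also have "\<dots> = A * tail_sum f k" unfolding tail_sum_def
    by (rule suminf_mult) (use assms summable_iff_shift[of "\<lambda>l. 1 / f l" k] in simp)
  finally show ?thesis .
qed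

lemma nq_olivier:
  assumes "nq_weight_seq f"
  shows "filterlim (\<lambda>l. f l / real l) at_top sequentially"
proof -
  have "(\<lambda>l. real l / f l) \<longlonglongrightarrow> 0"
  proof (rule LIMSEQ_I)
    fix r :: real assume r: "r > 0"
    obtain N where N: "\<forall>n\<ge>N. norm (\<Sum>i. 1 / f (i + n)) < r/2"
      using suminf_exist_split[of "r/2", OF _ nq_summable[OF assms]] r by auto
    show "\<exists>no. \<forall>n\<ge>no. norm (real n / f n - 0) < r"
    proof (intro exI allI impI)
      fix n assume n: "2*N \<le> n"
      have "real (n - n div 2 + 1) / f n \<le> tail_sum f (n div 2)"
        by (rule nq_tail_ge[OF assms]) simp
      moreover have "real n / f n \<le> 2 * (real (n - n div 2 + 1) / f n)"
        using nq_pos[OF assms, of n] by (simp add: field_simps)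
      moreover have "tail_sum f (n div 2) < r/2"
      proof -
        have "n div 2 \<ge> N" using n by linarith
        hence "norm (tail_sum f (n div 2)) < r/2" using N unfolding tail_sum_def by blast
        thus ?thesis by simp
      qed
      ultimately have "real n / f n \<le> 2 * tail_sum f (n div 2)" by linarith
      moreover have "real n / f n \<ge> 0" using nq_pos[OF assms, of n] by simp
      ultimately show "norm (real n / f n - 0) < r" using \<open>tail_sum f (n div 2) < r/2\<close> by simp
    qed
  qed
  hence "filterlim (\<lambda>l. inverse (real l / f l)) at_top sequentially"
    by (rule filterlim_inverse_at_top)
       (use nq_pos[OF assms] in \<open>auto simp: eventually_sequentially intro!: exI[of _ 1]\<close>)
  thus ?thesis by simp
qed


definition mm :: "(nat \<Rightarrow> real) \<Rightarrow> nat \<Rightarrow> real" where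
  "mm f k = (INF l\<in>{max 1 k..}. f l / real l)"

definition sig :: "(nat \<Rightarrow> real) \<Rightarrow> nat \<Rightarrow> real" where
  "sig f k = (if k = 0 then 1 else real k * max 1 (mm f k))"

lemma mm_bdd: "(\<And>l. f l > 0) \<Longrightarrow> bdd_below ((\<lambda>l. f l / real l) ` A)"
  by (rule bdd_belowI[of _ 0]) (auto intro!: divide_nonneg_nonneg simp: less_imp_le)

lemma mm_lower: "(\<And>l. f l > 0) \<Longrightarrow> max 1 k \<le> l \<Longrightarrow> mm f k \<le> f l / real l"
  unfolding mm_def by (rule cINF_lower) (auto intro: mm_bdd)

lemma mm_greatest: "(\<And>l. max 1 k \<le> l \<Longrightarrow> c \<le> f l / real l) \<Longrightarrow> c \<le> mm f k"
  unfolding mm_def by (rule cINF_greatest) auto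

lemma mm_mono: "(\<And>l. f l > 0) \<Longrightarrow> k \<le> k' \<Longrightarrow> mm f k \<le> mm f k'"
  by (rule mm_greatest, rule mm_lower) auto

lemma mm_cmp:
  assumes "\<And>l. f l > 0" "\<And>l. h l > 0" "\<And>l. f l \<le> A * h l" "A > 0"
  shows "mm f k \<le> A * mm h k"
proof -
  have "mm f k / A \<le> mm h k"
  proof (rule mm_greatest)
    fix l assume l: "max 1 k \<le> l"
    have "mm f k \<le> f l / real l" by (rule mm_lower[OF assms(1) l])
    also have "\<dots> \<le> A * h l / real l" using assms(3)[of l] l by (simp add: divide_right_mono)
    finally show "mm f k / A \<le> h l / real l" using assms(4) by (simp add: field_simps)
  qed
  thus ?thesis using assms(4) by (simp add: field_simps)
qed

lemma mm_nonneg: "(\<And>l. f l > 0) \<Longrightarrow> 0 \<le> mm f k"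
  by (rule mm_greatest) (auto intro: less_imp_le)

lemma sig_pos: "sig f k > 0"
  unfolding sig_def by auto

lemma sig_ge: "k \<ge> 1 \<Longrightarrow> sig f k / real k = max 1 (mm f k)"
  unfolding sig_def by auto

lemma sig_mono: assumes "\<And>l. f l > 0" shows "mono (sig f)"
proof (rule monoI)
  fix k k' :: nat assume kk: "k \<le> k'"
  show "sig f k \<le> sig f k'"
  proof (cases "k = 0")
    case True
    have "1 \<le> sig f k'"
    proof (cases "k' = 0")
      case False
      hence "1 \<le> real k'" by simp
      also have "\<dots> \<le> sig f k'" unfolding sig_def by auto
      finally show ?thesis .
    qed (simp add: sig_def)
    thus ?thesis using True by (simp add: sig_def)
  next
    case False
    have "mm f k \<le> mm f k'" using mm_mono[of f k k'] assms kk by blast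
    hence "real k * max 1 (mm f k) \<le> real k' * max 1 (mm f k')"
      using kk by (intro mult_mono) auto
    thus ?thesis using False kk unfolding sig_def by auto
  qed
qed

lemma sig_ge_k: "real k \<le> sig f k"
  unfolding sig_def by auto

lemma weight_from:
  assumes f0: "f 0 = 1" and mf: "mono f" and lim: "filterlim f at_top sequentially"
  shows "filterlim (\<lambda>k. weight_M f k powr (1 / real k)) at_top sequentially"
  unfolding filterlim_at_top_ge[where c=1]
proof (intro allI impI)
  fix Z :: real assume Z: "Z \<ge> 1"
  have f1: "f j \<ge> 1" for j using mf f0 by (metis le0 monoD)
  obtain N where N: "\<And>j. j \<ge> N \<Longrightarrow> f j \<ge> Z^2"
    using lim unfolding filterlim_at_top eventually_sequentially by blast
  show "eventually (\<lambda>k. Z \<le> weight_M f k powr (1 / real k)) sequentially"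
    unfolding eventually_sequentially
  proof (intro exI[of _ "2*N+1"] allI impI)
    fix k assume k: "2*N+1 \<le> k"
    have "(\<Prod>j\<le>k. (if N \<le> j then Z^2 else 1)) \<le> (\<Prod>j\<le>k. f j)"
      by (rule prod_mono) (use Z f1 N in auto)
    moreover have "(\<Prod>j\<le>k. (if N \<le> j then Z^2 else 1)) = (Z^2) ^ card ({..k} \<inter> {j. N \<le> j})"
      by (simp add: prod.If_cases)
    moreover have "card ({..k} \<inter> {j. N \<le> j}) = k + 1 - N"
    proof -
      have "{..k} \<inter> {j. N \<le> j} = {N..k}" by auto
      thus ?thesis by simp
    qed
    ultimately have "(Z^2) ^ (k + 1 - N) \<le> weight_M f k" unfolding weight_M_def by simp
    moreover have "Z ^ k \<le> (Z^2) ^ (k + 1 - N)"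
    proof -
      have "Z ^ k \<le> Z ^ (2 * (k + 1 - N))" using Z k by (intro power_increasing) auto
      thus ?thesis by (simp add: power_mult)
    qed
    ultimately have "Z ^ k \<le> weight_M f k" by linarith
    hence "(Z ^ k) powr (1 / real k) \<le> weight_M f k powr (1 / real k)"
      using Z by (intro powr_mono2) auto
    moreover have "(Z ^ k) powr (1 / real k) = Z"
      using Z k by (simp add: powr_realpow[symmetric] powr_powr)
    ultimately show "Z \<le> weight_M f k powr (1 / real k)" by simp
  qed
qed


lemma key_case2:
  fixes a b c d C :: real
  assumes "a > 0" "b > 0" "c > 0" "d > 0" "C > 0" "c / 2 / b \<le> C * (d / a)"
  shows "a / d \<le> 2 * C * (b / c)"
  using assms by (simp add: field_simps)

lemma key:
  assumes nqf: "nq_weight_seq f" and nqh: "nq_weight_seq h"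
    and A: "\<And>l. f l \<le> A * h l" "A > 0" and C: "C > 0"
    and T: "\<And>k. k \<ge> 1 \<Longrightarrow> tail_sum h k \<le> C * (real k / f k)"
  shows "\<exists>B\<ge>1. (\<forall>k\<ge>1. f k / real k \<le> B * mm h k) \<and> (\<forall>k. f k \<le> B * sig h k)"
proof -
  define B where "B = 2*A + 2*C + 1"
  have B1: "B \<ge> 1" using A C unfolding B_def by simp
  have fp: "\<And>l. f l > 0" and hp: "\<And>l. h l > 0" using nq_pos nqf nqh by auto
  have main: "f k / real k \<le> B * mm h k" if k: "k \<ge> 1" for k
  proof -
    have "f k / real k / B \<le> mm h k"
    proof (rule mm_greatest)
      fix l assume "max 1 k \<le> l"
      hence l: "k \<le> l" by simp
      have "f k / real k \<le> (2*A + 2*C) * (h l / real l)"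
      proof (cases "l < 2*k")
        case True
        have "f k \<le> A * h l" using A(1)[of k] nq_mono[OF nqh l] A(2)
          by (meson mult_left_mono less_imp_le order_trans)
        moreover have "real l \<le> 2 * real k" using True by simp
        ultimately have "f k * real l \<le> A * h l * (2 * real k)"
          using fp[of k] A(2) hp[of l] by (intro mult_mono) auto
        hence "f k / real k \<le> 2 * A * (h l / real l)"
          using k l hp[of l] by (simp add: field_simps)
        thus ?thesis using C hp[of l] l k by (smt (verit) divide_nonneg_nonneg mult_right_mono of_nat_0_le_iff less_imp_le)
      next
        case False
        have "real (l - k + 1) / h l \<le> tail_sum h k" by (rule nq_tail_ge[OF nqh l])
        moreover have "real l / 2 / h l \<le> real (l - k + 1) / h l"
          using False hp[of l] by (intro divide_right_mono) auto
        ultimately have "real l / 2 / h l \<le> C * (real k / f k)" using T[OF k] by linarith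
        hence "f k / real k \<le> 2 * C * (h l / real l)"
          by (intro key_case2) (use fp hp k l C in auto)
        thus ?thesis using A hp[of l] l k by (smt (verit) divide_nonneg_nonneg mult_right_mono of_nat_0_le_iff less_imp_le)
      qed
      also have "\<dots> \<le> B * (h l / real l)"
        unfolding B_def using hp[of l] by (intro mult_right_mono) auto
      finally have "f k / real k \<le> B * (h l / real l)" .
      moreover have "B > 0" using B1 by simp
      ultimately show "f k / real k / B \<le> h l / real l" by (metis mult.commute pos_divide_le_eq)
    qed
    moreover have "B > 0" using B1 by simp
    ultimately show ?thesis by (metis mult.commute pos_divide_le_eq)
  qed
  have "f k \<le> B * sig h k" for k
  proof (cases "k = 0")
    case True thus ?thesis using nqf B1 unfolding sig_def nq_weight_seq_def weight_seq_def by simp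
  next
    case False
    hence k: "k \<ge> 1" by simp
    have "f k = real k * (f k / real k)" using k by simp
    also have "\<dots> \<le> real k * (B * mm h k)" using main[OF k] by (intro mult_left_mono) auto
    also have "\<dots> \<le> real k * (B * max 1 (mm h k))" using B1 by (intro mult_left_mono) auto
    also have "\<dots> = B * sig h k" using k unfolding sig_def by simp
    finally show ?thesis .
  qed
  thus ?thesis using B1 main by blast
qed


lemma sig_upper:
  assumes nqh: "nq_weight_seq h"
  shows "\<exists>D>0. \<forall>k. sig h k \<le> D * h k"
proof -
  define S where "S = (\<Sum>l. 1 / h l)"
  have hp: "\<And>l. h l > 0" using nq_pos nqh by auto
  have S0: "S \<ge> 0" unfolding S_def
    by (rule suminf_nonneg[OF nq_summable[OF nqh]]) (simp add: hp less_imp_le)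
  have "sig h k \<le> (S + 1) * h k" for k
  proof (cases "k = 0")
    case True thus ?thesis using nqh S0 unfolding sig_def nq_weight_seq_def weight_seq_def by simp
  next
    case False
    hence k: "k \<ge> 1" by simp
    have mmk: "mm h k \<le> h k / real k" by (rule mm_lower[OF hp]) (use k in simp)
    have "sig h k = real k * max 1 (mm h k)" using k unfolding sig_def by simp
    also have "\<dots> \<le> real k + real k * mm h k" by (simp add: max_def mm_nonneg[OF hp])
    also have "\<dots> \<le> S * h k + h k"
    proof -
      have "real k * mm h k \<le> real k * (h k / real k)" using mmk by (intro mult_left_mono) auto
      also have "\<dots> = h k" using k by simp
      finally show ?thesis using nq_lin[OF nqh, of k] unfolding S_def by linarith
    qed
    finally show ?thesis by (simp add: algebra_simps)
  qed
  moreover have "S + 1 > 0" using S0 by simp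
  ultimately show ?thesis by blast
qed

lemma sig_cmp:
  assumes "\<And>l. f l > 0" "\<And>l. h l > 0" "\<And>l. f l \<le> A * h l" "A > 0"
  shows "sig f k \<le> max 1 A * sig h k"
proof (cases "k = 0")
  case True thus ?thesis by (simp add: sig_def)
next
  case False
  have "mm f k \<le> A * mm h k" by (rule mm_cmp[OF assms])
  moreover have "A * mm h k \<le> max 1 A * max 1 (mm h k)"
    using mm_nonneg[of h k] assms(2,4) by (intro mult_mono) auto
  moreover have "1 * 1 \<le> max 1 A * max 1 (mm h k)"
    by (intro mult_mono) auto
  ultimately have "max 1 (mm f k) \<le> max 1 A * max 1 (mm h k)" by simp
  hence "real k * max 1 (mm f k) \<le> real k * (max 1 A * max 1 (mm h k))" by (intro mult_left_mono) auto
  thus ?thesis using False by (simp add: sig_def mult.left_commute)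
qed

lemma sig_props:
  assumes nqf: "nq_weight_seq f" and nqh: "nq_weight_seq h" and B: "B \<ge> 1"
    and m: "\<forall>k\<ge>1. f k / real k \<le> B * mm h k" and s: "\<forall>k. f k \<le> B * sig h k"
  shows "nq_weight_seq (sig h)" and "filterlim (\<lambda>k. sig h k / real k) at_top sequentially"
proof -
  have hp: "\<And>l. h l > 0" using nq_pos nqh by auto
  have "filterlim (\<lambda>k. (1/B) * (f k / real k)) at_top sequentially"
    by (rule filterlim_tendsto_pos_mult_at_top[OF tendsto_const _ nq_olivier[OF nqf]]) (use B in simp)
  thus lim: "filterlim (\<lambda>k. sig h k / real k) at_top sequentially"
  proof (rule filterlim_at_top_mono)
    show "eventually (\<lambda>k. (1/B) * (f k / real k) \<le> sig h k / real k) sequentially"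
      unfolding eventually_sequentially
    proof (intro exI[of _ 1] allI impI)
      fix k :: nat assume k: "k \<ge> 1"
      have "(1/B) * (f k / real k) \<le> mm h k" using m k B by (simp add: field_simps)
      also have "\<dots> \<le> sig h k / real k" using sig_ge[OF k] by simp
      finally show "(1/B) * (f k / real k) \<le> sig h k / real k" .
    qed
  qed
  have "filterlim (sig h) at_top sequentially"
    by (rule filterlim_at_top_mono[OF filterlim_real_sequentially]) (simp add: sig_ge_k)
  hence ws: "weight_seq (sig h)" unfolding weight_seq_def
    using weight_from[of "sig h"] sig_mono[OF hp] by (simp add: sig_def)
  have "summable (\<lambda>k. 1 / sig h k)"
  proof (rule summable_comparison_test'[where N=0])
    show "summable (\<lambda>k. B * (1 / f k))" by (rule summable_mult[OF nq_summable[OF nqf]])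
    fix k :: nat
    have "f k > 0" using nq_pos[OF nqf] by auto
    with s sig_pos[of h k] show "norm (1 / sig h k) \<le> B * (1 / f k)"
      by (simp add: field_simps)
  qed
  thus "nq_weight_seq (sig h)" using ws unfolding nq_weight_seq_def nonquasianalytic_def by simp
qed

primrec Gf :: "(real \<Rightarrow> real) \<Rightarrow> nat \<Rightarrow> real" where
  "Gf Y 0 = 1"
| "Gf Y (Suc n) = max (Gf Y n) (max (real (Suc n)) (Y (real (Suc n))))"

lemma Gf_mono: "mono (Gf Y)"
  by (rule incseq_SucI) simp

lemma Gf_ge1: "Gf Y n \<ge> 1"
  by (induction n) auto

lemma Gf_ge_n: "Gf Y n \<ge> real n"
  by (cases n) auto

lemma Gf_ge_Y: "n \<ge> 1 \<Longrightarrow> Gf Y n \<ge> Y (real n)"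
  by (cases n) auto


theorem lemma5p14:
  fixes mu :: "real \<Rightarrow> nat \<Rightarrow> real"
  assumes wmu: "\<And>x. x > 0 \<Longrightarrow> nq_weight_seq (mu x)"
    and monomu: "\<And>x y. 0 < x \<Longrightarrow> x \<le> y \<Longrightarrow> seq_lesssim (mu x) (mu y)"
    and tailmu: "\<forall>x>0. \<exists>y>0. \<exists>C>0. \<forall>k\<ge>1. tail_sum (mu y) k \<le> C * (real k / mu x k)"
  shows "\<exists>sigma :: real \<Rightarrow> nat \<Rightarrow> real.
    (\<forall>x>0. nq_weight_seq (sigma x)) \<and>
    (\<forall>x>0. (\<forall>k\<ge>1. sigma x k / real k \<ge> 1)
          \<and> (\<forall>k\<ge>1. \<forall>l\<ge>k. sigma x k / real k \<le> sigma x l / real l)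
          \<and> filterlim (\<lambda>k. sigma x k / real k) at_top sequentially) \<and>
    (\<forall>x y. 0 < x \<and> x \<le> y \<longrightarrow> seq_lesssim (sigma x) (sigma y)) \<and>
    (\<forall>x>0. \<exists>y>0. \<exists>C>0. \<forall>k\<ge>1. tail_sum (sigma y) k \<le> C * (real k / sigma x k)) \<and>
    (\<forall>x>0. \<exists>y>0. seq_lesssim (sigma x) (mu y)) \<and>
    (\<forall>x>0. \<exists>y>0. seq_lesssim (mu x) (sigma y))"
proof -
  define W where "W x z \<longleftrightarrow> (\<exists>C>0. \<forall>k\<ge>1. tail_sum (mu z) k \<le> C * (real k / mu x k))" for x z
  have mpos: "mu x l > 0" if "x > 0" for x l using nq_pos[OF wmu[OF that]] .
  have W_up: "W x z'" if hW: "W x z" "0 < z" "z \<le> z'" "x > 0" for x z z'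
  proof -
    obtain C where C: "C > 0" "\<forall>k\<ge>1. tail_sum (mu z) k \<le> C * (real k / mu x k)"
      using \<open>W x z\<close> unfolding W_def by blast
    obtain A where A: "A > 0" "\<forall>k. mu z k \<le> A * mu z' k"
      using monomu[OF hW(2,3)] unfolding seq_lesssim_def by blast
    have "tail_sum (mu z') k \<le> (A * C) * (real k / mu x k)" if k: "k \<ge> 1" for k
    proof -
      have "tail_sum (mu z') k \<le> A * tail_sum (mu z) k"
        by (rule tail_le) (use A wmu \<open>0 < z\<close> \<open>z \<le> z'\<close> mpos in \<open>auto intro: nq_summable\<close>)
      also have "\<dots> \<le> A * (C * (real k / mu x k))" using C k A by (intro mult_left_mono) auto
      finally show ?thesis by (simp add: mult.assoc)
    qed
    thus ?thesis unfolding W_def using A C by (intro exI[of _ "A*C"]) auto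
  qed
  have W_down: "W x' z" if hW: "W x z" "0 < x'" "x' \<le> x" for x x' z
  proof -
    obtain C where C: "C > 0" "\<forall>k\<ge>1. tail_sum (mu z) k \<le> C * (real k / mu x k)"
      using \<open>W x z\<close> unfolding W_def by blast
    obtain A where A: "A > 0" "\<forall>k. mu x' k \<le> A * mu x k"
      using monomu[OF hW(2,3)] unfolding seq_lesssim_def by blast
    have "tail_sum (mu z) k \<le> (C * A) * (real k / mu x' k)" if k: "k \<ge> 1" for k
    proof -
      have p: "mu x k > 0" "mu x' k > 0" using mpos hW by auto
      have "real k * mu x' k \<le> real k * (A * mu x k)"
        using A(2)[rule_format, of k] by (intro mult_left_mono) auto
      hence "real k / mu x k \<le> A * (real k / mu x' k)"
        using p A(1) by (simp add: field_simps mult.left_commute)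
      hence "C * (real k / mu x k) \<le> C * (A * (real k / mu x' k))" using C by (intro mult_left_mono) auto
      moreover have "tail_sum (mu z) k \<le> C * (real k / mu x k)" using C(2) k by blast
      ultimately show ?thesis by (simp add: mult.assoc)
    qed
    thus ?thesis unfolding W_def using A C by (intro exI[of _ "C*A"]) auto
  qed
  have "\<forall>x. \<exists>y. x > 0 \<longrightarrow> y > 0 \<and> W x y" using tailmu unfolding W_def by blast
  then obtain Y where Y: "\<And>x. x > 0 \<Longrightarrow> Y x > 0 \<and> W x (Y x)" by metis
  define g where "g x = Gf Y (nat \<lceil>x\<rceil>)" for x :: real
  have g_pos: "g x > 0" for x :: real unfolding g_def using Gf_ge1[where Y=Y] by (smt (verit))
  have g_ge: "x \<le> g x" for x :: real unfolding g_def using Gf_ge_n[where Y=Y and n="nat \<lceil>x\<rceil>"]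
    by (smt (verit) of_nat_ceiling)
  have g_mono: "g x \<le> g x'" if "x \<le> x'" for x x' :: real unfolding g_def
    using that by (intro monoD[OF Gf_mono] nat_mono ceiling_mono)
  have g_W: "W x (g x)" if x: "x > 0" for x
  proof -
    define n where "n = nat \<lceil>x\<rceil>"
    have n1: "n \<ge> 1" using x unfolding n_def by linarith
    have xn: "x \<le> real n" unfolding n_def by (simp add: of_nat_ceiling)
    have npos: "real n > 0" using n1 by simp
    have "W (real n) (Y (real n))" using Y[OF npos] by blast
    hence "W (real n) (g x)"
      by (rule W_up) (use Y[OF npos] Gf_ge_Y[OF n1, of Y] npos in \<open>auto simp: g_def n_def\<close>)
    thus ?thesis by (rule W_down) (use x xn in auto)
  qed
  define sigma where "sigma x = sig (mu (g x))" for x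
  have per: "\<exists>B\<ge>1. (\<forall>k\<ge>1. mu x k / real k \<le> B * mm (mu (g x)) k) \<and> (\<forall>k. mu x k \<le> B * sigma x k)"
    if x: "x > 0" for x
  proof -
    obtain A where A: "A > 0" "\<forall>k. mu x k \<le> A * mu (g x) k"
      using monomu[OF x g_ge] unfolding seq_lesssim_def by blast
    obtain C where C: "C > 0" "\<forall>k\<ge>1. tail_sum (mu (g x)) k \<le> C * (real k / mu x k)"
      using g_W[OF x] unfolding W_def by blast
    show ?thesis unfolding sigma_def
      by (rule key[OF wmu[OF x] wmu[OF g_pos] _ A(1) C(1)]) (use A C in auto)
  qed
  have nqs: "nq_weight_seq (sigma x)" and lims: "filterlim (\<lambda>k. sigma x k / real k) at_top sequentially"
    if x: "x > 0" for x
  proof -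
    obtain B where B: "B \<ge> 1" "\<forall>k\<ge>1. mu x k / real k \<le> B * mm (mu (g x)) k" "\<forall>k. mu x k \<le> B * sigma x k"
      using per[OF x] by blast
    show "nq_weight_seq (sigma x)" "filterlim (\<lambda>k. sigma x k / real k) at_top sequentially"
      unfolding sigma_def by (rule sig_props[OF wmu[OF x] wmu[OF g_pos] B(1) B(2)], use B(3) sigma_def in simp)+
  qed
  have upper: "\<exists>D>0. \<forall>k. sigma x k \<le> D * mu (g x) k" for x
    unfolding sigma_def by (rule sig_upper[OF wmu[OF g_pos]])
  have P1: "\<forall>x>0. (\<forall>k\<ge>1. sigma x k / real k \<ge> 1)
          \<and> (\<forall>k\<ge>1. \<forall>l\<ge>k. sigma x k / real k \<le> sigma x l / real l)
          \<and> filterlim (\<lambda>k. sigma x k / real k) at_top sequentially"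
  proof (rule allI, rule impI, intro conjI)
    fix x :: real assume x: "x > 0"
    show "\<forall>k\<ge>1. sigma x k / real k \<ge> 1" unfolding sigma_def using sig_ge by simp
    show "\<forall>k\<ge>1. \<forall>l\<ge>k. sigma x k / real k \<le> sigma x l / real l"
    proof (intro allI impI)
      fix k l :: nat assume kl: "k \<ge> 1" "l \<ge> k"
      have "mm (mu (g x)) k \<le> mm (mu (g x)) l"
        using mm_mono[of "mu (g x)" k l] mpos[OF g_pos] kl by blast
      thus "sigma x k / real k \<le> sigma x l / real l"
        unfolding sigma_def using sig_ge[of k] sig_ge[of l] kl by auto
    qed
    show "filterlim (\<lambda>k. sigma x k / real k) at_top sequentially" by (rule lims[OF x])
  qed
  have P2: "\<forall>x y. 0 < x \<and> x \<le> y \<longrightarrow> seq_lesssim (sigma x) (sigma y)"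
  proof (intro allI impI)
    fix x y :: real assume xy: "0 < x \<and> x \<le> y"
    obtain A where A: "A > 0" "\<forall>k. mu (g x) k \<le> A * mu (g y) k"
      using monomu[OF g_pos g_mono] xy unfolding seq_lesssim_def by blast
    have "sigma x k \<le> max 1 A * sigma y k" for k
      unfolding sigma_def by (rule sig_cmp) (use A mpos g_pos in auto)
    thus "seq_lesssim (sigma x) (sigma y)" unfolding seq_lesssim_def
      by (intro exI[of _ "max 1 A"]) auto
  qed
  have P3: "\<forall>x>0. \<exists>y>0. \<exists>C>0. \<forall>k\<ge>1. tail_sum (sigma y) k \<le> C * (real k / sigma x k)"
  proof (intro allI impI)
    fix x :: real assume x: "x > 0"
    define y where "y = g (g x)"
    have y: "y > 0" unfolding y_def by (rule g_pos)
    obtain B where B: "B \<ge> 1" "\<forall>k. mu y k \<le> B * sigma y k" using per[OF y] by blast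
    obtain C where C: "C > 0" "\<forall>k\<ge>1. tail_sum (mu y) k \<le> C * (real k / mu (g x) k)"
      using g_W[OF g_pos[of x]] unfolding W_def y_def by blast
    obtain D where D: "D > 0" "\<forall>k. sigma x k \<le> D * mu (g x) k" using upper by blast
    have "tail_sum (sigma y) k \<le> (B * C * D) * (real k / sigma x k)" if k: "k \<ge> 1" for k
    proof -
      have "tail_sum (sigma y) k \<le> B * tail_sum (mu y) k"
        by (rule tail_le) (use B nq_summable[OF wmu[OF y]] nq_summable[OF nqs[OF y]] mpos[OF y] in auto)
      also have "\<dots> \<le> B * (C * (real k / mu (g x) k))" using C k B by (intro mult_left_mono) auto
      also have "real k / mu (g x) k \<le> D * (real k / sigma x k)"
      proof -
        have "sigma x k > 0" unfolding sigma_def by (rule sig_pos)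
        moreover have "mu (g x) k > 0" by (rule mpos[OF g_pos])
        moreover have "real k * sigma x k \<le> real k * (D * mu (g x) k)"
          using D(2)[rule_format, of k] by (intro mult_left_mono) auto
        ultimately show ?thesis using D(1) by (simp add: field_simps mult.left_commute)
      qed
      hence "B * (C * (real k / mu (g x) k)) \<le> B * (C * (D * (real k / sigma x k)))"
        using B C by (intro mult_left_mono) auto
      finally show ?thesis by (simp add: mult.assoc)
    qed
    moreover have "B * C * D > 0" using B C D by simp
    ultimately show "\<exists>y>0. \<exists>C>0. \<forall>k\<ge>1. tail_sum (sigma y) k \<le> C * (real k / sigma x k)"
      using y by blast
  qed
  have P4: "\<forall>x>0. \<exists>y>0. seq_lesssim (sigma x) (mu y)"
    using upper g_pos unfolding seq_lesssim_def by blast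
  have P5: "\<forall>x>0. \<exists>y>0. seq_lesssim (mu x) (sigma y)"
  proof (intro allI impI)
    fix x :: real assume x: "x > 0"
    obtain B where B: "B \<ge> 1" "\<forall>k. mu x k \<le> B * sigma x k" using per[OF x] by blast
    hence "seq_lesssim (mu x) (sigma x)" unfolding seq_lesssim_def by (intro exI[of _ B]) auto
    thus "\<exists>y>0. seq_lesssim (mu x) (sigma y)" using x by blast
  qed
  show ?thesis using nqs P1 P2 P3 P4 P5 by blast
qed

end
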